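(* Consider the SDP pair and one-step ADMM in the context, under the standing assumptions, and suppose $Z^{(k)}\to Z_\star=X_\star-\sigma S_\star$ where $(X_\star,y_\star,S_\star)$ is a KKT point with $\operatorname{rank}X_\star+\operatorname{rank}S_\star=n$. Suppose moreover primal nondegeneracy $\mathcal N_{X_\star}\cap\mathcal R(\mathcal A^* )=\{0\}$ and dual nondegeneracy $\mathcal N_{S_\star}\cap\mathcal N(\mathcal A)=\{0\}$ hold. Then for any $\rho\in(\|\mathcal M\|_{\mathrm{op}},1)$ there exists $\bar k_{\mathrm{ND}}\in\mathbb N$ such that for every integer $k\ge\bar k_{\mathrm{ND}}$, $\|Z^{(k+1)}-Z_\star\|_F\le\rho\|Z^{(k)}-Z_\star\|_F$.
   Context: $\mathbb S^n$: real symmetric $n\times n$ matrices, $\langle X,Y\rangle=\operatorname{tr}(XY)$, Frobenius norm $\|\cdot\|_F$; $\Pi_{\mathbb S^n_+}$ the projection onto the PSD cone. Data $C,A_1,\dots,A_m\in\mathbb S^n$, $b\in\mathbb R^m$; $\mathcal AX=(\langle A_i,X\rangle)_{i=1}^m$, $\mathcal A^*y=\sum_iy_iA_i$; $\mathcal R(\mathcal A^* )$ its range and $\mathcal N(\mathcal A)$ the null space of $\mathcal A$. Primal: minimize $\langle C,X\rangle$ s.t. $\mathcal AX=b$, $X\succeq0$; dual: maximize $b^\top y$ s.t. $\mathcal A^*y+S=C$, $S\succeq0$. KKT point: $(X,y,S)$ with $\mathcal AX=b$, $\mathcal A^*y+S=C$, $\langle X,S\rangle=0$, $X,S\succeq0$.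 Standing assumptions: $\mathcal A$ surjective and KKT set nonempty. $\mathcal P=\mathcal A^*(\mathcal A\mathcal A^* )^{-1}\mathcal A$, $\mathcal P^\perp=\mathrm{Id}-\mathcal P$. For $\sigma>0$, $Z^{(0)}\in\mathbb S^n$, one-step ADMM: $Z^{(k+1)}=\mathcal P(-2\Pi_{\mathbb S^n_+}(Z^{(k)})+Z^{(k)})+\Pi_{\mathbb S^n_+}(Z^{(k)})+\mathcal A^*(\mathcal A\mathcal A^* )^{-1}b+\sigma\mathcal PC-\sigma C$. There is an orthogonal $Q_\star$ with $Z_\star=Q_\star\operatorname{diag}(\lambda_1,\dots,\lambda_n)Q_\star^\top$, $\lambda_1\ge\dots\ge\lambda_r>0>\lambda_{r+1}\ge\dots\ge\lambda_n$, $r=\operatorname{rank}X_\star$, $X_\star=Q_\star\operatorname{diag}(\lambda_1,\dots,\lambda_r,0,\dots,0)Q_\star^\top$, $\sigma S_\star=Q_\star\operatorname{diag}(0,\dots,0,-\lambda_{r+1},\dots,-\lambda_n)Q_\star^\top$. $\mathcal N_{X_\star}=\{Q_\star\begin{pmatrix}0&0\\0&D\end{pmatrix}Q_\star^\top:D\in\mathbb S^{n-r}\}$, $\mathcal N_{S_\star}=\{Q_\star\begin{pmatrix}A&0\\0&0\end{pmatrix}Q_\star^\top:A\in\mathbb S^{r}\}$. $\Theta\in\mathbb R^{(n-r)\times r}$, $\Theta_{ij}=\lambda_j/(\lambda_j-\lambda_{i+r})$; $\Omega=\begin{pmatrix}E_r&\Theta^\top\\\Theta&0\end{pmatrix}$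 ($E_r$ all-ones). With $\circ$ the Hadamard product, $\mathcal D(H)=Q_\star(\Omega\circ(Q_\star^\top HQ_\star))Q_\star^\top$, $\mathcal D^\perp(H)=H-\mathcal D(H)$, $\mathcal M(H)=\mathcal P\mathcal D^\perp(H)+\mathcal P^\perp\mathcal D(H)$; $\|\cdot\|_{\mathrm{op}}$ is the operator norm induced by $\|\cdot\|_F$. *)

theory Defs
  imports "HOL-Analysis.Analysis"
begin

text \<open>Symmetric matrices S^n, realised as real^'n^'n with n = CARD('n).
  The Frobenius norm is the Euclidean norm on real^'n^'n.\<close>

definition symm :: "real^'n^'n \<Rightarrow> bool" where
  "symm X \<longleftrightarrow> transpose X = X"

definition psd :: "real^'n^'n \<Rightarrow> bool" where
  "psd X \<longleftrightarrow> symm X \<and> (\<forall>x. 0 \<le> x \<bullet> (X *v x))"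

definition sinner :: "real^'n^'n \<Rightarrow> real^'n^'n \<Rightarrow> real" where
  "sinner X Y = trace (X ** Y)"

definition projPSD :: "real^'n^'n \<Rightarrow> real^'n^'n" where
  "projPSD Z = (THE Y. psd Y \<and> (\<forall>W. psd W \<longrightarrow> norm (Z - Y) \<le> norm (Z - W)))"

definition Aop :: "('m::finite \<Rightarrow> real^'n^'n) \<Rightarrow> real^'n^'n \<Rightarrow> real^'m" where
  "Aop A X = (\<chi> i. sinner (A i) X)"

definition Astar :: "('m::finite \<Rightarrow> real^'n^'n) \<Rightarrow> real^'m \<Rightarrow> real^'n^'n" where
  "Astar A y = (\<Sum>i\<in>UNIV. (y $ i) *\<^sub>R A i)"

definition gram :: "('m::finite \<Rightarrow> real^'n^'n) \<Rightarrow> real^'m^'m" where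
  "gram A = (\<chi> i j. sinner (A i) (A j))"

definition Pop :: "('m::finite \<Rightarrow> real^'n^'n) \<Rightarrow> real^'n^'n \<Rightarrow> real^'n^'n" where
  "Pop A X = Astar A (matrix_inv (gram A) *v Aop A X)"

definition admm_step ::
  "('m::finite \<Rightarrow> real^'n^'n) \<Rightarrow> real^'m \<Rightarrow> real^'n^'n \<Rightarrow> real \<Rightarrow> real^'n^'n \<Rightarrow> real^'n^'n" where
  "admm_step A b C \<sigma> Z =
     Pop A (- 2 *\<^sub>R projPSD Z + Z) + projPSD Z + Astar A (matrix_inv (gram A) *v b)
     + \<sigma> *\<^sub>R Pop A C - \<sigma> *\<^sub>R C"

definition KKT ::
  "('m::finite \<Rightarrow> real^'n^'n) \<Rightarrow> real^'m \<Rightarrow> real^'n^'n \<Rightarrow> real^'n^'n \<Rightarrow> real^'m \<Rightarrow> real^'n^'n \<Rightarrow> bool" where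
  "KKT A b C X y S \<longleftrightarrow> Aop A X = b \<and> Astar A y + S = C \<and> sinner X S = 0 \<and> psd X \<and> psd S"

definition diagm :: "('n \<Rightarrow> real) \<Rightarrow> real^'n^'n" where
  "diagm f = (\<chi> i j. if i = j then f i else 0)"

definition hadamard :: "real^'n^'n \<Rightarrow> real^'n^'n \<Rightarrow> real^'n^'n" where
  "hadamard U V = (\<chi> i j. U $ i $ j * V $ i $ j)"

text \<open>Omega, with the block structure described through the index sets
  {i. lam i > 0} (first block) and {i. lam i < 0} (second block).\<close>
definition Omega :: "('n \<Rightarrow> real) \<Rightarrow> real^'n^'n" where
  "Omega lam = (\<chi> i j.
     if 0 < lam i \<and> 0 < lam j then 1
     else if lam i < 0 \<and> 0 < lam j then lam j / (lam j - lam i)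
     else if 0 < lam i \<and> lam j < 0 then lam i / (lam i - lam j)
     else 0)"

definition Dop :: "real^'n^'n \<Rightarrow> ('n \<Rightarrow> real) \<Rightarrow> real^'n^'n \<Rightarrow> real^'n^'n" where
  "Dop Q lam H = Q ** hadamard (Omega lam) (transpose Q ** H ** Q) ** transpose Q"

definition Mop ::
  "('m::finite \<Rightarrow> real^'n^'n) \<Rightarrow> real^'n^'n \<Rightarrow> ('n \<Rightarrow> real) \<Rightarrow> real^'n^'n \<Rightarrow> real^'n^'n" where
  "Mop A Q lam H = Pop A (H - Dop Q lam H) + (Dop Q lam H - Pop A (Dop Q lam H))"

definition opnorm_sym :: "(real^'n^'n \<Rightarrow> real^'n^'n) \<Rightarrow> real" where
  "opnorm_sym T = Sup {norm (T H) | H. symm H \<and> norm H = 1}"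

definition NX :: "real^'n^'n \<Rightarrow> ('n \<Rightarrow> real) \<Rightarrow> (real^'n^'n) set" where
  "NX Q lam = {Q ** D ** transpose Q | D. symm D \<and>
                 (\<forall>i j. \<not> (lam i < 0 \<and> lam j < 0) \<longrightarrow> D $ i $ j = 0)}"

definition NS :: "real^'n^'n \<Rightarrow> ('n \<Rightarrow> real) \<Rightarrow> (real^'n^'n) set" where
  "NS Q lam = {Q ** D ** transpose Q | D. symm D \<and>
                 (\<forall>i j. \<not> (0 < lam i \<and> 0 < lam j) \<longrightarrow> D $ i $ j = 0)}"

end

theory Submission
  imports Defs
begin

lemma mm_add_r: "((A::real^'n^'n) + B) ** C = A ** C + B ** C"
  by (simp add: matrix_matrix_mult_def vec_eq_iff sum.distrib distrib_right)
lemma mm_diff_l: "(A::real^'n^'n) ** (B - C) = A ** B - A ** C"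
  by (simp add: matrix_matrix_mult_def vec_eq_iff sum_subtractf right_diff_distrib)
lemma mm_diff_r: "((A::real^'n^'n) - B) ** C = A ** C - B ** C"
  by (simp add: matrix_matrix_mult_def vec_eq_iff sum_subtractf left_diff_distrib)
lemma mm_scale_l: "(c *\<^sub>R (A::real^'n^'n)) ** B = c *\<^sub>R (A ** B)"
  by (simp add: matrix_matrix_mult_def vec_eq_iff sum_distrib_left mult_ac)
lemma mm_scale_r: "(A::real^'n^'n) ** (c *\<^sub>R B) = c *\<^sub>R (A ** B)"
  by (simp add: matrix_matrix_mult_def vec_eq_iff sum_distrib_left mult_ac)
lemma mm_minus_l: "(- (A::real^'n^'n)) ** B = - (A ** B)"
  by (simp add: matrix_matrix_mult_def vec_eq_iff sum_negf)
lemma tr_add: "transpose ((A::real^'n^'n) + B) = transpose A + transpose B"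
  by (simp add: transpose_def vec_eq_iff)
lemma tr_diff: "transpose ((A::real^'n^'n) - B) = transpose A - transpose B"
  by (simp add: transpose_def vec_eq_iff)
lemma tr_minus: "transpose (- (A::real^'n^'n)) = - transpose A"
  by (simp add: transpose_def vec_eq_iff)
lemma tr_zero: "transpose (0::real^'n^'n) = 0"
  by (simp add: transpose_def vec_eq_iff)

lemma inner_trace: "(A::real^'n^'n) \<bullet> B = trace (transpose A ** B)"
  by (simp add: inner_vec_def trace_def matrix_matrix_mult_def transpose_def) (rule sum.swap)

lemma mv_scale: "(c *\<^sub>R (A::real^'n^'n)) *v x = c *\<^sub>R (A *v x)"
  by (simp add: matrix_vector_mult_def vec_eq_iff sum_distrib_left mult_ac)

lemma linear_mv_left: "linear (\<lambda>Y::real^'n^'n. Y *v x)"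
  by (rule linearI) (simp_all add: matrix_vector_mult_add_rdistrib mv_scale)

lemma linear_transpose: "linear (transpose :: real^'n^'n \<Rightarrow> real^'n^'n)"
  by (rule linearI) (simp_all add: tr_add transpose_scalar)

lemma trace_scale: "trace (c *\<^sub>R (A::real^'n^'n)) = c * trace A"
  by (simp add: trace_def sum_distrib_left)

lemma quad_conj: "x \<bullet> ((B ** Y ** transpose B) *v x) = (transpose B *v x) \<bullet> (Y *v (transpose B *v x))"
  for B Y :: "real^'n^'n"
  by (metis dot_lmul_matrix matrix_vector_mul_assoc transpose_matrix_vector)

lemma psd_conj: "psd Y \<Longrightarrow> psd (B ** Y ** transpose B)" for B Y :: "real^'n^'n"
  unfolding psd_def symm_def
  by (simp add: quad_conj matrix_transpose_mul matrix_mul_assoc)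

lemma psd_convex: "convex {Y::real^'n^'n. psd Y}"
  unfolding convex_def psd_def symm_def
  by (auto simp: tr_add transpose_scalar mv_scale matrix_vector_mult_add_rdistrib inner_add_right intro!: add_nonneg_nonneg mult_nonneg_nonneg)

lemma psd_closed: "closed {Y::real^'n^'n. psd Y}"
proof -
  have eq: "{Y::real^'n^'n. psd Y} = {Y. transpose Y - Y = 0} \<inter> (\<Inter>x. {Y. 0 \<le> x \<bullet> (Y *v x)})"
    by (auto simp: psd_def symm_def)
  have c1: "closed {Y::real^'n^'n. transpose Y - Y = 0}"
    by (intro closed_Collect_eq continuous_intros) (auto intro!: linear_continuous_on simp: linear_conv_bounded_linear[symmetric] linear_transpose)
  have c3: "closed {Y::real^'n^'n. 0 \<le> x \<bullet> (Y *v x)}" for x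
    by (intro closed_Collect_le continuous_intros)
       (auto intro!: linear_continuous_on simp: linear_conv_bounded_linear[symmetric] linear_mv_left)
  have c2: "closed (\<Inter>x. {Y::real^'n^'n. 0 \<le> x \<bullet> (Y *v x)})"
    by (intro closed_INT ballI c3)
  show ?thesis unfolding eq by (rule closed_Int[OF c1 c2])
qed

lemma psd_zero: "psd (0::real^'n^'n)"
  by (simp add: psd_def symm_def tr_zero)

lemma psd_nonempty: "{Y::real^'n^'n. psd Y} \<noteq> {}"
  using psd_zero by blast

lemma projPSD_eq: "projPSD Z = closest_point {Y::real^'n^'n. psd Y} Z"
  unfolding projPSD_def
proof (rule the_equality)
  show "psd (closest_point {Y. psd Y} Z) \<and> (\<forall>W. psd W \<longrightarrow> norm (Z - closest_point {Y. psd Y} Z) \<le> norm (Z - W))"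
    using closest_point_in_set[OF psd_closed psd_nonempty, of Z] closest_point_le[OF psd_closed, of _ Z]
    by (auto simp: dist_norm)
next
  fix Y assume Y: "psd Y \<and> (\<forall>W. psd W \<longrightarrow> norm (Z - Y) \<le> norm (Z - W))"
  show "Y = closest_point {Y. psd Y} Z"
    by (rule closest_point_unique[OF psd_convex psd_closed]) (use Y in \<open>auto simp: dist_norm\<close>)
qed

lemma projPSD_psd: "psd (projPSD Z)"
  using closest_point_in_set[OF psd_closed psd_nonempty, of Z] by (simp add: projPSD_eq)

lemma projPSD_lip: "norm (projPSD Z - projPSD Z') \<le> norm (Z - Z')"
  using closest_point_lipschitz[OF psd_convex psd_closed psd_nonempty, of Z Z'] by (simp add: projPSD_eq dist_norm)

lemma projPSD_dot: "psd W \<Longrightarrow> (Z - projPSD Z) \<bullet> (W - projPSD Z) \<le> 0"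
  using closest_point_dot[OF psd_convex psd_closed, of W Z] by (simp add: projPSD_eq)

lemma projPSD_cont: "continuous_on UNIV (projPSD :: real^'n^'n \<Rightarrow> _)"
  unfolding projPSD_eq[abs_def]
  by (rule continuous_on_closest_point[OF psd_convex psd_closed psd_nonempty])

lemma projPSD_char:
  fixes Y Z :: "real^'n^'n"
  assumes Y: "psd Y" and v: "\<And>W::real^'n^'n. psd W \<Longrightarrow> (Z - Y) \<bullet> (W - Y) \<le> 0"
  shows "projPSD Z = Y"
proof -
  have "Y = closest_point {Y. psd Y} Z"
  proof (rule closest_point_unique[OF psd_convex psd_closed])
    show "Y \<in> {Y. psd Y}" using Y by simp
    show "\<forall>z\<in>{Y. psd Y}. dist Z Y \<le> dist Z z"
    proof
      fix W :: "real^'n^'n" assume "W \<in> {Y. psd Y}"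
      then have h: "(Z - Y) \<bullet> (W - Y) \<le> 0" using v by simp
      have "(norm (Z - W))^2 = (norm ((Z - Y) - (W - Y)))^2" by simp
      also have "\<dots> = (norm (Z - Y))^2 - 2 * ((Z - Y) \<bullet> (W - Y)) + (norm (W - Y))^2"
        by (simp add: power2_norm_eq_inner inner_diff_left inner_diff_right inner_commute)
      finally have "(norm (Z - Y))^2 \<le> (norm (Z - W))^2" using h by (smt (verit) zero_le_power2)
      then show "dist Z Y \<le> dist Z W" by (simp add: dist_norm power2_le_iff_abs_le)
    qed
  qed
  then show ?thesis by (simp add: projPSD_eq)
qed

lemma quad_zero:
  fixes a b :: real
  assumes "\<And>t. t * a + t * t * b \<le> 0"
  shows "a = 0"
proof (rule ccontr)
  assume a: "a \<noteq> 0"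
  define t where "t = a / (\<bar>b\<bar> + 1)"
  have t0: "t \<noteq> 0" using a by (simp add: t_def add_pos_nonneg)
  have p: "\<bar>b\<bar> + 1 > 0" using abs_ge_zero[of b] by linarith
  have tc: "t * (\<bar>b\<bar> + 1) = a" unfolding t_def using p by simp
  have "t * a = t * t * (\<bar>b\<bar> + 1)" by (simp add: tc mult.assoc)
  then have e: "t * a + t * t * b = t * t * (\<bar>b\<bar> + b + 1)" by (simp add: algebra_simps)
  have tt: "t * t > 0" using t0 by (simp add: zero_less_mult_iff) (meson linorder_neqE_linordered_idom)
  have bb: "\<bar>b\<bar> + b + 1 > 0" using abs_ge_minus_self[of b] by linarith
  have "t * t * (\<bar>b\<bar> + b + 1) > 0" by (rule mult_pos_pos[OF tt bb])
  then show False using assms[of t] e by simp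
qed

lemma complementarity:
  fixes Z :: "real^'n^'n"
  assumes Zs: "symm Z"
  shows "projPSD Z ** (Z - projPSD Z) = 0"
proof -
  define Y where "Y = projPSD Z"
  define G where "G = Z - Y"
  have Ys: "transpose Y = Y" using projPSD_psd[of Z] by (simp add: Y_def psd_def symm_def)
  have Gs: "transpose G = G" using Zs Ys by (simp add: G_def symm_def tr_diff)
  define K where "K = G ** Y"
  have Kt: "transpose K = Y ** G" by (simp add: K_def matrix_transpose_mul Ys Gs)
  define \<alpha> where "\<alpha> = G \<bullet> (K ** Y + Y ** transpose K)"
  define \<beta> where "\<beta> = G \<bullet> (K ** Y ** transpose K)"
  have "t * \<alpha> + t * t * \<beta> \<le> 0" for t
  proof -
    define B where "B = mat 1 + t *\<^sub>R K"
    have Bt: "transpose B = mat 1 + t *\<^sub>R transpose K" by (simp add: B_def tr_add transpose_scalar)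
    have W: "B ** Y ** transpose B = Y + (t *\<^sub>R (K ** Y + Y ** transpose K) + (t * t) *\<^sub>R (K ** Y ** transpose K))"
      unfolding Bt unfolding B_def
      by (simp add: mm_add_r matrix_add_ldistrib mm_scale_l mm_scale_r matrix_mul_assoc scaleR_add_right algebra_simps)
    have "G \<bullet> (B ** Y ** transpose B - Y) \<le> 0"
      using projPSD_dot[where Z=Z, OF psd_conj[OF projPSD_psd[of Z], of B]] by (simp add: G_def Y_def)
    then show ?thesis unfolding W by (simp add: \<alpha>_def \<beta>_def inner_add_right)
  qed
  then have a0: "\<alpha> = 0" by (rule quad_zero)
  have "\<alpha> = trace (G ** (G ** Y ** Y)) + trace (G ** Y ** Y ** G)"
    unfolding \<alpha>_def inner_trace Gs Kt unfolding K_def by (simp add: matrix_add_ldistrib trace_add matrix_mul_assoc)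
  also have "trace (G ** (G ** Y ** Y)) = trace (G ** Y ** Y ** G)" by (rule trace_mul_sym)
  also have "trace (G ** Y ** Y ** G) = (Y ** G) \<bullet> (Y ** G)"
  proof -
    have "transpose (Y ** G) = G ** Y" by (simp add: matrix_transpose_mul Ys Gs)
    then show ?thesis unfolding inner_trace by (simp add: matrix_mul_assoc)
  qed
  finally have "(Y ** G) \<bullet> (Y ** G) = 0" using a0 by simp
  then show ?thesis by (simp add: Y_def G_def)
qed

lemma entry_le: "\<bar>(A::real^'n^'m) $ i $ j\<bar> \<le> norm A"
  using component_le_norm_cart[of "A$i" j] Finite_Cartesian_Product.norm_nth_le[of A i] by linarith

lemma norm_le_entries: "norm (A::real^'n^'m) \<le> (\<Sum>i\<in>UNIV. \<Sum>j\<in>UNIV. \<bar>A $ i $ j\<bar>)"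
proof -
  have "norm A \<le> (\<Sum>i\<in>UNIV. norm (A $ i))" by (simp add: norm_vec_def L2_set_le_sum)
  also have "\<dots> \<le> (\<Sum>i\<in>UNIV. \<Sum>j\<in>UNIV. \<bar>A $ i $ j\<bar>)" by (intro sum_mono norm_le_l1_cart)
  finally show ?thesis .
qed

lemma norm_le_entries_bound:
  assumes "\<And>i j. \<bar>(A::real^'n^'n) $ i $ j\<bar> \<le> b"
  shows "norm A \<le> real CARD('n) * (real CARD('n) * b)"
proof -
  have "norm A \<le> (\<Sum>i\<in>UNIV. \<Sum>j\<in>UNIV. \<bar>A $ i $ j\<bar>)" by (rule norm_le_entries)
  also have "\<dots> \<le> (\<Sum>i\<in>(UNIV::'n set). real CARD('n) * b)"
    by (intro sum_mono) (metis (no_types, lifting) assms sum_bounded_above)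
  also have "\<dots> = real CARD('n) * (real CARD('n) * b)" by simp
  finally show ?thesis .
qed

lemma prod_entry_le: "\<bar>((A::real^'n^'n) ** B) $ i $ j\<bar> \<le> real CARD('n) * (norm A * norm B)"
proof -
  have "\<bar>(A ** B) $ i $ j\<bar> = \<bar>\<Sum>k\<in>UNIV. A $ i $ k * B $ k $ j\<bar>"
    by (simp add: matrix_matrix_mult_def)
  also have "\<dots> \<le> (\<Sum>k\<in>UNIV. \<bar>A $ i $ k * B $ k $ j\<bar>)" by (rule sum_abs)
  also have "\<dots> \<le> (\<Sum>k\<in>(UNIV::'n set). norm A * norm B)"
    by (intro sum_mono) (simp add: abs_mult mult_mono entry_le)
  also have "\<dots> = real CARD('n) * (norm A * norm B)" by simp
  finally show ?thesis .
qed

lemma linear_sandwich: fixes B C :: "real^'n^'n" shows "linear (\<lambda>X::real^'n^'n. B ** X ** C)"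
  by (rule linearI) (simp_all add: matrix_add_ldistrib mm_add_r mm_scale_l mm_scale_r)

lemma sandwich_bound: fixes B C :: "real^'n^'n" shows "\<exists>c>0. \<forall>X::real^'n^'n. norm (B ** X ** C) \<le> c * norm X"
proof -
  have "bounded_linear (\<lambda>X::real^'n^'n. B ** X ** C)"
    using linear_sandwich linear_conv_bounded_linear by blast
  then obtain c where "c > 0" "\<forall>X. norm (B ** X ** C) \<le> norm X * c"
    using bounded_linear.pos_bounded by blast
  then show ?thesis by (metis mult.commute)
qed

lemma diagm_symm: "transpose (diagm f) = diagm f"
  by (simp add: diagm_def transpose_def vec_eq_iff)

lemma scalar_case:
  fixes li lj e h r m :: real
  assumes li: "li \<noteq> 0" and lj: "lj \<noteq> 0" and m: "0 < m" "m \<le> \<bar>li\<bar>" "m \<le> \<bar>lj\<bar>"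
    and nc: "\<not> (li < 0 \<and> 0 < lj)"
    and eq: "(if 0 < li then li else 0) * (h - e) - e * (if lj < 0 then - lj else 0) + r = 0"
  shows "\<bar>e - (if 0 < li \<and> 0 < lj then 1
     else if li < 0 \<and> 0 < lj then lj / (lj - li)
     else if 0 < li \<and> lj < 0 then li / (li - lj)
     else 0) * h\<bar> \<le> \<bar>r\<bar> / m"
proof (cases "0 < li")
  case True
  note li' = True
  show ?thesis
  proof (cases "0 < lj")
    case True
    then have "e - h = r / li" using eq li' by (simp add: field_simps)
    then have "\<bar>e - h\<bar> = \<bar>r\<bar> / li" using li' by simp
    also have "\<dots> \<le> \<bar>r\<bar> / m" using m li' by (intro divide_left_mono) auto
    finally show ?thesis using li' True by simp
  next
    case False
    then have lj': "lj < 0" using lj by simp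
    have d: "li - lj > 0" using li' lj' by simp
    have "e * (li - lj) = li * h + r" using eq li' lj' by (simp add: algebra_simps)
    then have "e - li / (li - lj) * h = r / (li - lj)" using d by (simp add: field_simps)
    then have "\<bar>e - li / (li - lj) * h\<bar> = \<bar>r\<bar> / (li - lj)" using d by simp
    also have "\<dots> \<le> \<bar>r\<bar> / m" using m li' lj' by (intro divide_left_mono) auto
    finally show ?thesis using li' lj' by simp
  qed
next
  case False
  then have li': "li < 0" using li by simp
  then have lj': "lj < 0" using nc lj by auto
  have "e = - r / lj" using eq li' lj' by (simp add: field_simps)
  then have "\<bar>e\<bar> = \<bar>r\<bar> / \<bar>lj\<bar>" by (simp add: abs_divide)
  also have "\<dots> \<le> \<bar>r\<bar> / m" using m lj by (intro divide_left_mono) auto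
  finally show ?thesis using li' lj' by simp
qed

lemma diag_mult_entry_l: "(diagm f ** A) $ i $ j = f i * A $ i $ j"
  by (simp add: diagm_def matrix_matrix_mult_def if_distrib if_distribR sum.delta cong: if_cong)

lemma key_bound:
  fixes Q Zs Xs :: "real^'n^'n" and lam :: "'n \<Rightarrow> real"
  assumes orthQ: "orthogonal_matrix Q"
    and lam_nz: "\<forall>i. lam i \<noteq> 0"
    and Zs: "Zs = Q ** diagm lam ** transpose Q"
    and Xs: "Xs = Q ** diagm (\<lambda>i. if 0 < lam i then lam i else 0) ** transpose Q"
    and PZs: "projPSD Zs = Xs"
  shows "\<exists>K. \<forall>H. symm H \<longrightarrow> norm (projPSD (Zs + H) - Xs - Dop Q lam H) \<le> K * (norm H)^2"
proof -
  define lp where "lp = (\<lambda>i. if 0 < lam i then lam i else 0)"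
  define mu where "mu = (\<lambda>i. if lam i < 0 then - lam i else 0)"
  have QtQ: "transpose Q ** Q = mat 1" and QQt: "Q ** transpose Q = mat 1"
    using orthQ by (auto simp: orthogonal_matrix_def)
  define cj where "cj = (\<lambda>A::real^'n^'n. transpose Q ** A ** Q)"
  define bk where "bk = (\<lambda>A::real^'n^'n. Q ** A ** transpose Q)"
  obtain c1 where c1: "c1 > 0" "\<And>X. norm (cj X) \<le> c1 * norm X"
    using sandwich_bound[of "transpose Q" Q] unfolding cj_def by blast
  obtain c2 where c2: "c2 > 0" "\<And>X. norm (bk X) \<le> c2 * norm X"
    using sandwich_bound[of Q "transpose Q"] unfolding bk_def by blast
  have bkcj: "bk (cj A) = A" for A
    by (simp add: bk_def cj_def matrix_mul_assoc QQt) (simp add: matrix_mul_assoc[symmetric] QQt)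
  have cjbk: "cj (bk A) = A" for A
    by (simp add: bk_def cj_def matrix_mul_assoc QtQ) (simp add: matrix_mul_assoc[symmetric] QtQ)
  have cjmul: "cj (A ** B) = cj A ** cj B" for A B
    by (simp add: cj_def matrix_mul_assoc) (simp add: matrix_mul_assoc[symmetric] QQt)
  have cjdiff: "cj (A - B) = cj A - cj B" for A B
    by (simp add: cj_def mm_diff_l mm_diff_r)
  have cjadd: "cj (A + B) = cj A + cj B" for A B
    by (simp add: cj_def matrix_add_ldistrib mm_add_r)
  have bkdiff: "bk (A - B) = bk A - bk B" for A B
    by (simp add: bk_def mm_diff_l mm_diff_r)
  have cjtr: "transpose (cj A) = cj (transpose A)" for A
    by (simp add: cj_def matrix_transpose_mul matrix_mul_assoc)
  have cjZs: "cj Zs = diagm lam" using Zs bk_def cjbk by auto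
  have cjXs: "cj Xs = diagm lp" using Xs bk_def cjbk lp_def by auto
  have Zsym: "symm Zs" unfolding symm_def Zs
    by (simp add: matrix_transpose_mul diagm_symm matrix_mul_assoc)
  define m where "m = Min ((\<lambda>i. \<bar>lam i\<bar>) ` UNIV)"
  have m_pos: "m > 0" unfolding m_def using lam_nz by (subst Min_gr_iff) auto
  have m_le: "m \<le> \<bar>lam i\<bar>" for i unfolding m_def by (rule Min_le) auto
  define n where "n = real CARD('n)"
  define K where "K = c2 * (n * (n * (n * (c1 * (2 * c1)) / m)))"
  have "norm (projPSD (Zs + H) - Xs - Dop Q lam H) \<le> K * (norm H)^2" if Hs: "symm H" for H
  proof -
    define Y where "Y = projPSD (Zs + H)"
    define G where "G = Zs + H - Y"
    have YG: "Y ** G = 0"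
      using complementarity[of "Zs + H"] Zsym Hs
      by (simp add: Y_def G_def symm_def tr_add)
    define Et where "Et = cj Y - diagm lp"
    define Ht where "Ht = cj H"
    define Ft where "Ft = Ht - Et"
    have EtXs: "Et = cj (Y - Xs)" by (simp add: Et_def cjdiff cjXs)
    have nE: "norm Et \<le> c1 * norm H"
    proof -
      have "norm (Y - Xs) \<le> norm H"
        using projPSD_lip[of "Zs + H" Zs] by (simp add: Y_def PZs)
      then show ?thesis using c1 EtXs by (metis mult_left_mono less_imp_le order_trans)
    qed
    have nH: "norm Ht \<le> c1 * norm H" using c1 Ht_def by simp
    have nF: "norm Ft \<le> 2 * c1 * norm H"
      using norm_triangle_ineq4[of Ht Et] nE nH by (simp add: Ft_def)
    have cY: "cj Y = diagm lp + Et" by (simp add: Et_def)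
    have cG: "cj G = Ft - diagm mu"
    proof -
      have "diagm lam - diagm lp = - diagm mu"
        using lam_nz by (auto simp: diagm_def vec_eq_iff lp_def mu_def)
      then show ?thesis by (simp add: G_def cjdiff cjadd cjZs cY Ft_def Ht_def algebra_simps)
    qed
    have prod0: "(diagm lp + Et) ** (Ft - diagm mu) = 0"
    proof -
      have "cj Y ** cj G = 0" using YG cjmul[of Y G] by (simp add: cj_def)
      then show ?thesis by (simp only: cY cG)
    qed
    have Esym: "transpose Et = Et"
    proof -
      have "transpose Y = Y" using projPSD_psd[of "Zs+H"] by (simp add: Y_def psd_def symm_def)
      then show ?thesis by (simp add: Et_def tr_diff cjtr diagm_symm)
    qed
    have Hsym: "transpose Ht = Ht" using Hs by (simp add: Ht_def cjtr symm_def)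
    have entry: "lp i * (Ht $ i $ j - Et $ i $ j) - Et $ i $ j * mu j + (Et ** Ft) $ i $ j = 0" for i j
    proof -
      have "((diagm lp + Et) ** (Ft - diagm mu)) $ i $ j = 0" using prod0 by simp
      moreover have "((diagm lp + Et) ** (Ft - diagm mu)) $ i $ j
          = lp i * Ft $ i $ j - (if i = j then lp i * mu i else 0) + (Et ** Ft) $ i $ j - Et $ i $ j * mu j"
        by (simp add: mm_add_r mm_diff_l diag_mult_entry_l)
           (simp add: diagm_def matrix_matrix_mult_def if_distrib if_distribR sum.delta cong: if_cong)
      moreover have "(if i = j then lp i * mu i else 0) = 0" by (simp add: lp_def mu_def)
      ultimately have "lp i * Ft $ i $ j + (Et ** Ft) $ i $ j - Et $ i $ j * mu j = 0" by linarith
      then show ?thesis by (simp add: Ft_def right_diff_distrib)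
    qed
    define r where "r = n * (c1 * norm H * (2 * c1 * norm H))"
    have rb: "\<bar>(Et ** Ft) $ i $ j\<bar> \<le> r" for i j
    proof -
      have "\<bar>(Et ** Ft) $ i $ j\<bar> \<le> n * (norm Et * norm Ft)" using prod_entry_le n_def by simp
      also have "\<dots> \<le> r" unfolding r_def n_def
        using c1 by (intro mult_left_mono mult_mono nE nF) auto
      finally show ?thesis .
    qed
    have ent_nc: "\<bar>Et $ i $ j - Omega lam $ i $ j * Ht $ i $ j\<bar> \<le> r / m"
      if nc: "\<not> (lam i < 0 \<and> 0 < lam j)" for i j
    proof -
      have "\<bar>Et $ i $ j - Omega lam $ i $ j * Ht $ i $ j\<bar> \<le> \<bar>(Et ** Ft) $ i $ j\<bar> / m"
        unfolding Omega_def vec_lambda_beta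
        by (rule scalar_case[OF _ _ m_pos m_le m_le nc]) (use lam_nz entry[of i j] in \<open>auto simp: lp_def mu_def\<close>)
      also have "\<dots> \<le> r / m" using rb m_pos by (simp add: divide_right_mono)
      finally show ?thesis .
    qed
    have ent: "\<bar>(Et - hadamard (Omega lam) Ht) $ i $ j\<bar> \<le> r / m" for i j
    proof (cases "lam i < 0 \<and> 0 < lam j")
      case False
      then show ?thesis using ent_nc by (simp add: hadamard_def)
    next
      case True
      have "\<bar>Et $ j $ i - Omega lam $ j $ i * Ht $ j $ i\<bar> \<le> r / m" using True by (intro ent_nc) auto
      moreover have "Et $ j $ i = Et $ i $ j" using Esym by (metis transpose_def vec_lambda_beta)
      moreover have "Ht $ j $ i = Ht $ i $ j" using Hsym by (metis transpose_def vec_lambda_beta)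
      moreover have "Omega lam $ j $ i = Omega lam $ i $ j" using True by (simp add: Omega_def)
      ultimately show ?thesis by (simp add: hadamard_def)
    qed
    have R: "Y - Xs - Dop Q lam H = bk (Et - hadamard (Omega lam) Ht)"
    proof -
      have 1: "bk Et = Y - Xs" by (simp add: EtXs bkcj)
      have 2: "bk (hadamard (Omega lam) Ht) = Dop Q lam H" by (simp add: Dop_def bk_def Ht_def cj_def)
      show ?thesis by (simp only: bkdiff 1 2)
    qed
    have "norm (Et - hadamard (Omega lam) Ht) \<le> n * (n * (r / m))"
      using norm_le_entries_bound[OF ent] by (simp add: n_def)
    then have "norm (Y - Xs - Dop Q lam H) \<le> c2 * (n * (n * (r / m)))"
      unfolding R using c2 by (meson mult_left_mono less_imp_le order_trans)
    also have "\<dots> = K * (norm H)^2"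
      by (simp add: K_def r_def power2_eq_square field_simps)
    finally show ?thesis by (simp add: Y_def)
  qed
  then show ?thesis by blast
qed

lemma linear_Aop: "linear (Aop A :: real^'n^'n \<Rightarrow> real^'m)"
  by (rule linearI) (simp_all add: Aop_def sinner_def vec_eq_iff matrix_add_ldistrib trace_add mm_scale_r trace_scale)

lemma linear_Astar: "linear (Astar A :: real^'m \<Rightarrow> real^'n^'n)"
  by (rule linearI) (simp_all add: Astar_def scaleR_add_left sum.distrib scaleR_sum_right)

lemma linear_Pop: "linear (Pop A :: real^'n^'n \<Rightarrow> real^'n^'n)"
proof -
  have "linear (Astar A \<circ> (\<lambda>v. matrix_inv (gram A) *v v) \<circ> Aop A)"
    by (intro linear_compose linear_Aop linear_Astar matrix_vector_mul_linear)
  then show ?thesis by (simp add: Pop_def[abs_def] o_def)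
qed

lemma hadamard_add: "hadamard U (V + W) = hadamard U V + hadamard U W"
  by (simp add: hadamard_def vec_eq_iff distrib_left)
lemma hadamard_scale: "hadamard U (c *\<^sub>R V) = c *\<^sub>R hadamard U V"
  by (simp add: hadamard_def vec_eq_iff)

lemma linear_Dop: "linear (Dop Q lam :: real^'n^'n \<Rightarrow> real^'n^'n)"
  by (rule linearI) (simp_all add: Dop_def matrix_add_ldistrib mm_add_r mm_scale_l mm_scale_r hadamard_add hadamard_scale)

lemma linear_Mop: "linear (Mop A Q lam :: real^'n^'n \<Rightarrow> real^'n^'n)"
  using linear_Pop[of A] linear_Dop[of Q lam]
  by (intro linearI) (simp_all add: Mop_def linear_add linear_diff linear_scale algebra_simps)

lemma lin_bound: "linear (f::real^'n^'n \<Rightarrow> real^'n^'n) \<Longrightarrow> \<exists>c>0. \<forall>X. norm (f X) \<le> c * norm X"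
  by (metis bounded_linear.pos_bounded linear_conv_bounded_linear mult.commute)

lemma opnorm_bound:
  fixes f :: "real^'n^'n \<Rightarrow> real^'n^'n"
  assumes lf: "linear f" and Hs: "symm H"
  shows "norm (f H) \<le> opnorm_sym f * norm H"
proof (cases "H = 0")
  case True
  then show ?thesis using linear_0[OF lf] by simp
next
  case False
  obtain c where c: "c > 0" "\<And>X. norm (f X) \<le> c * norm X" using lin_bound[OF lf] by blast
  define S where "S = {norm (f H) | H. symm H \<and> norm H = 1}"
  have bdd: "bdd_above S" unfolding S_def
  proof (rule bdd_aboveI[of _ c])
    fix x assume "x \<in> {norm (f H) |H. symm H \<and> norm H = 1}"
    then obtain H where "x = norm (f H)" "norm H = 1" by blast
    then show "x \<le> c" using c(2)[of H] by simp
  qed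
  define H' where "H' = (1 / norm H) *\<^sub>R H"
  have nH: "norm H > 0" using False by simp
  have "symm H'" using Hs by (simp add: H'_def symm_def transpose_scalar)
  moreover have "norm H' = 1" using nH by (simp add: H'_def)
  ultimately have "norm (f H') \<in> S" unfolding S_def by blast
  then have "norm (f H') \<le> Sup S" using bdd by (rule cSup_upper)
  moreover have "norm (f H') = norm (f H) / norm H"
    using nH by (simp add: H'_def linear_scale[OF lf])
  ultimately have "norm (f H) / norm H \<le> opnorm_sym f" by (simp add: opnorm_sym_def S_def)
  then show ?thesis using nH by (simp add: divide_le_eq)
qed

lemma T_expand:
  fixes P :: "real^'n^'n \<Rightarrow> real^'n^'n"
  assumes "linear P"
  shows "P (- 2 *\<^sub>R Y' + Z') + Y' - (P (- 2 *\<^sub>R Y + Z) + Y)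
    = (P ((Z' - Z) - D) + (D - P D)) + ((Y' - Y - D) - 2 *\<^sub>R P (Y' - Y - D))"
  by (simp only: linear_add[OF assms] linear_diff[OF assms] linear_scale[OF assms] linear_neg[OF assms])
     (simp add: scaleR_2 scaleR_minus_left algebra_simps)

lemma symm_add: "symm A \<Longrightarrow> symm B \<Longrightarrow> symm (A + B)"
  by (simp add: symm_def tr_add)
lemma symm_diff: "symm A \<Longrightarrow> symm B \<Longrightarrow> symm (A - B)"
  by (simp add: symm_def tr_diff)
lemma symm_scale: "symm A \<Longrightarrow> symm (c *\<^sub>R A)"
  by (simp add: symm_def transpose_scalar)
lemma symm_Astar: "\<forall>i. symm (A i) \<Longrightarrow> symm (Astar A y)"
  by (simp add: symm_def Astar_def transpose_def vec_eq_iff sum_component)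

lemma symm_step:
  assumes "symm C" "\<forall>i. symm (A i)"
  shows "symm (admm_step A b C \<sigma> Z)"
proof -
  have p: "symm (projPSD Z)" using projPSD_psd[of Z] by (simp add: psd_def)
  have "symm (Pop A X)" for X using assms(2) by (simp add: Pop_def symm_Astar)
  then show ?thesis unfolding admm_step_def
    by (intro symm_add symm_diff symm_scale p assms(1) symm_Astar assms(2)) auto
qed

lemma inner_diag_psd:
  fixes Q W :: "real^'n^'n"
  assumes orthQ: "orthogonal_matrix Q" and mu: "\<forall>i. 0 \<le> mu i" and W: "psd W"
  shows "0 \<le> (Q ** diagm mu ** transpose Q) \<bullet> W"
proof -
  define V where "V = transpose Q ** W ** Q"
  have Vp: "psd V" using psd_conj[OF W, of "transpose Q"] by (simp add: V_def)
  have "(Q ** diagm mu ** transpose Q) \<bullet> W = trace (Q ** (diagm mu ** transpose Q ** W))"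
    by (simp add: inner_trace matrix_transpose_mul diagm_symm matrix_mul_assoc)
  also have "\<dots> = trace ((diagm mu ** transpose Q ** W) ** Q)"
    by (rule trace_mul_sym)
  also have "\<dots> = (\<Sum>i\<in>UNIV. mu i * V $ i $ i)"
    by (simp add: trace_def V_def matrix_mul_assoc[symmetric] diag_mult_entry_l)
  also have "\<dots> \<ge> 0"
  proof (intro sum_nonneg mult_nonneg_nonneg)
    fix i
    show "0 \<le> mu i" using mu by simp
    have "V $ i $ i = axis i 1 \<bullet> (V *v axis i 1)"
    proof -
      have "axis i 1 \<bullet> (V *v axis i 1) = (V *v axis i 1) $ i" by (simp add: inner_axis')
      also have "\<dots> = V $ i $ i"
        by (simp add: matrix_vector_mult_def axis_def mult.commute[of "V $ i $ _"] if_distrib cong: if_cong)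
      finally show ?thesis by simp
    qed
    then show "0 \<le> V $ i $ i" using Vp by (simp add: psd_def)
  qed
  finally show ?thesis .
qed

theorem theorem3:
  fixes A :: "'m::finite \<Rightarrow> real^'n^'n" and b :: "real^'m" and C :: "real^'n^'n"
    and \<sigma> :: real and Z :: "nat \<Rightarrow> real^'n^'n"
    and Xs Ss Q :: "real^'n^'n" and ys :: "real^'m" and lam :: "'n \<Rightarrow> real" and \<rho> :: real
  assumes symC: "symm C"
    and symA: "\<forall>i. symm (A i)"
    and surjA: "\<forall>v. \<exists>X. symm X \<and> Aop A X = v"
    and KKT_nonempty: "\<exists>X y S. KKT A b C X y S"
    and sigma_pos: "0 < \<sigma>"
    and Z0: "symm (Z 0)"
    and iter: "\<forall>k. Z (Suc k) = admm_step A b C \<sigma> (Z k)"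
    and kkt: "KKT A b C Xs ys Ss"
    and strict_compl: "rank Xs + rank Ss = CARD('n)"
    and conv: "Z \<longlonglongrightarrow> Xs - \<sigma> *\<^sub>R Ss"
    and orthQ: "orthogonal_matrix Q"
    and lam_nz: "\<forall>i. lam i \<noteq> 0"
    and Zs_eig: "Xs - \<sigma> *\<^sub>R Ss = Q ** diagm lam ** transpose Q"
    and Xs_eig: "Xs = Q ** diagm (\<lambda>i. if 0 < lam i then lam i else 0) ** transpose Q"
    and Ss_eig: "\<sigma> *\<^sub>R Ss = Q ** diagm (\<lambda>i. if lam i < 0 then - lam i else 0) ** transpose Q"
    and primal_nondeg: "NX Q lam \<inter> range (Astar A) = {0}"
    and dual_nondeg: "NS Q lam \<inter> {X. symm X \<and> Aop A X = 0} = {0}"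
    and rho: "opnorm_sym (Mop A Q lam) < \<rho>" "\<rho> < 1"
  shows "\<exists>kbar::nat. \<forall>k\<ge>kbar.
           norm (Z (Suc k) - (Xs - \<sigma> *\<^sub>R Ss)) \<le> \<rho> * norm (Z k - (Xs - \<sigma> *\<^sub>R Ss))"
proof -
  define Zs where "Zs = Xs - \<sigma> *\<^sub>R Ss"
  define T where "T = admm_step A b C \<sigma>"
  define mu where "mu = (\<lambda>i. if lam i < 0 then - lam i else 0)"
  have Xpsd: "psd Xs" and Spsd: "psd Ss" and XS: "sinner Xs Ss = 0"
    using kkt by (auto simp: KKT_def)
  have Zs_eig': "Zs = Q ** diagm lam ** transpose Q" using Zs_eig by (simp add: Zs_def)
  have PZs: "projPSD Zs = Xs"
  proof (rule projPSD_char[OF Xpsd])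
    fix W :: "real^'n^'n" assume W: "psd W"
    have Ssym: "transpose Ss = Ss" using Spsd by (simp add: psd_def symm_def)
    have a: "(\<sigma> *\<^sub>R Ss) \<bullet> Xs = 0"
    proof -
      have "Ss \<bullet> Xs = trace (Ss ** Xs)" by (simp only: inner_trace Ssym)
      also have "\<dots> = trace (Xs ** Ss)" by (rule trace_mul_sym)
      finally have "Ss \<bullet> Xs = trace (Xs ** Ss)" .
      then show ?thesis using XS by (simp add: sinner_def)
    qed
    have b: "0 \<le> (\<sigma> *\<^sub>R Ss) \<bullet> W"
      unfolding Ss_eig by (rule inner_diag_psd[OF orthQ _ W]) auto
    have "(Zs - Xs) \<bullet> (W - Xs) = - ((\<sigma> *\<^sub>R Ss) \<bullet> W) + (\<sigma> *\<^sub>R Ss) \<bullet> Xs"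
      by (simp add: Zs_def inner_diff_right)
    then show "(Zs - Xs) \<bullet> (W - Xs) \<le> 0" using a b by linarith
  qed
  obtain K where K: "\<And>H. symm H \<Longrightarrow> norm (projPSD (Zs + H) - Xs - Dop Q lam H) \<le> K * (norm H)^2"
    using key_bound[OF orthQ lam_nz Zs_eig' Xs_eig PZs] by blast
  define K0 where "K0 = \<bar>K\<bar> + 1"
  have K0: "K0 > 0" by (simp add: K0_def add_nonneg_pos)
  have K0b: "norm (projPSD (Zs + H) - Xs - Dop Q lam H) \<le> K0 * (norm H)^2" if "symm H" for H
  proof -
    have "K * (norm H)^2 \<le> K0 * (norm H)^2" unfolding K0_def
      by (intro mult_right_mono) auto
    then show ?thesis using K[OF that] by linarith
  qed
  have linP: "linear (Pop A)" by (rule linear_Pop)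
  have contP: "continuous_on UNIV (Pop A)"
    using linP by (simp add: linear_continuous_on linear_conv_bounded_linear)
  have contT: "continuous_on UNIV T"
  proof -
    have "continuous_on UNIV (\<lambda>Z. Pop A (- 2 *\<^sub>R projPSD Z + Z))"
      by (rule continuous_on_compose2[OF contP]) (auto intro!: continuous_intros projPSD_cont)
    then show ?thesis unfolding T_def admm_step_def[abs_def]
      by (auto intro!: continuous_intros projPSD_cont)
  qed
  have TZs: "T Zs = Zs"
  proof -
    have "(\<lambda>k. T (Z k)) \<longlonglongrightarrow> T Zs"
    proof -
      have "isCont T Zs" using contT by (simp add: continuous_on_eq_continuous_at)
      moreover have "Z \<longlonglongrightarrow> Zs" using conv by (simp add: Zs_def)
      ultimately show ?thesis by (rule isCont_tendsto_compose)
    qed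
    moreover have "(\<lambda>k. T (Z k)) = (\<lambda>k. Z (Suc k))" using iter by (simp add: T_def)
    moreover have "(\<lambda>k. Z (Suc k)) \<longlonglongrightarrow> Zs" using conv LIMSEQ_Suc by (simp add: Zs_def)
    ultimately show ?thesis using LIMSEQ_unique by metis
  qed
  have symZ: "symm (Z k)" for k
  proof (induction k)
    case 0 then show ?case using Z0 by simp
  next
    case (Suc k) then show ?case using iter symm_step[OF symC symA] by simp
  qed
  have symZs: "symm Zs" unfolding Zs_eig' symm_def
    by (simp add: matrix_transpose_mul diagm_symm matrix_mul_assoc)
  obtain cP where cP: "cP > 0" "\<And>X. norm (Pop A X) \<le> cP * norm X" using lin_bound[OF linP] by blast
  define opM where "opM = opnorm_sym (Mop A Q lam)"
  define Kc where "Kc = (1 + 2 * cP) * K0"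
  have Kc: "Kc > 0" using cP K0 by (simp add: Kc_def)
  have step: "norm (T (Zs + H) - Zs) \<le> opM * norm H + Kc * (norm H)^2" if Hs: "symm H" for H
  proof -
    define R where "R = projPSD (Zs + H) - Xs - Dop Q lam H"
    have e: "T (Zs + H) - Zs = Mop A Q lam H + (R - 2 *\<^sub>R Pop A R)"
    proof -
      have "T (Zs + H) - Zs = T (Zs + H) - T Zs" using TZs by simp
      also have "\<dots> = Pop A (- 2 *\<^sub>R projPSD (Zs + H) + (Zs + H)) + projPSD (Zs + H)
          - (Pop A (- 2 *\<^sub>R projPSD Zs + Zs) + projPSD Zs)"
        by (simp add: T_def admm_step_def)
      also have "\<dots> = (Pop A ((Zs + H - Zs) - Dop Q lam H) + (Dop Q lam H - Pop A (Dop Q lam H)))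
          + ((projPSD (Zs + H) - projPSD Zs - Dop Q lam H) - 2 *\<^sub>R Pop A (projPSD (Zs + H) - projPSD Zs - Dop Q lam H))"
        by (rule T_expand[OF linP])
      also have "\<dots> = Mop A Q lam H + (R - 2 *\<^sub>R Pop A R)"
        by (simp add: Mop_def R_def PZs)
      finally show ?thesis .
    qed
    have nR: "norm R \<le> K0 * (norm H)^2" using K0b[OF Hs] by (simp add: R_def)
    have "norm (T (Zs + H) - Zs) \<le> norm (Mop A Q lam H) + (norm R + 2 * norm (Pop A R))"
    proof -
      have 1: "norm (Mop A Q lam H + (R - 2 *\<^sub>R Pop A R)) \<le> norm (Mop A Q lam H) + norm (R - 2 *\<^sub>R Pop A R)"
        by (rule norm_triangle_ineq)
      have 2: "norm (R - 2 *\<^sub>R Pop A R) \<le> norm R + norm (2 *\<^sub>R Pop A R)" by (rule norm_triangle_ineq4)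
      have 3: "norm (2 *\<^sub>R Pop A R) = 2 * norm (Pop A R)" by simp
      show ?thesis unfolding e using 1 2 3 by linarith
    qed
    also have "\<dots> \<le> opM * norm H + (norm R + 2 * (cP * norm R))"
      using opnorm_bound[OF linear_Mop[of A Q lam] Hs] cP(2)[of R] unfolding opM_def by linarith
    also have "\<dots> = opM * norm H + (1 + 2 * cP) * norm R" by (simp add: algebra_simps)
    also have "\<dots> \<le> opM * norm H + Kc * (norm H)^2"
      using nR cP by (simp add: Kc_def mult_left_mono)
    finally show ?thesis .
  qed
  have gap: "\<rho> - opM > 0" using rho(1) by (simp add: opM_def)
  have "(\<lambda>k. Z k - Zs) \<longlonglongrightarrow> 0" using conv unfolding Zs_def by (simp add: LIM_zero)
  then have "(\<lambda>k. norm (Z k - Zs)) \<longlonglongrightarrow> 0" by (simp add: tendsto_norm_zero)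
  then obtain N where N: "\<And>k. k \<ge> N \<Longrightarrow> norm (Z k - Zs) < (\<rho> - opM) / Kc"
  proof -
    have "(\<rho> - opM) / Kc > 0" using gap Kc by simp
    then obtain N where "\<forall>k\<ge>N. norm (norm (Z k - Zs) - 0) < (\<rho> - opM) / Kc"
      using \<open>(\<lambda>k. norm (Z k - Zs)) \<longlonglongrightarrow> 0\<close> unfolding LIMSEQ_iff by blast
    then show ?thesis using that by auto
  qed
  show ?thesis
  proof (intro exI allI impI)
    fix k assume k: "N \<le> k"
    define H where "H = Z k - Zs"
    have Hs: "symm H" unfolding H_def by (rule symm_diff[OF symZ symZs])
    have small: "Kc * norm H \<le> \<rho> - opM"
      using N[OF k] Kc by (simp add: H_def field_simps)
    have "Z (Suc k) - Zs = T (Zs + H) - Zs" by (simp add: H_def iter T_def)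
    then have "norm (Z (Suc k) - Zs) \<le> opM * norm H + Kc * (norm H)^2" using step[OF Hs] by simp
    also have "\<dots> = opM * norm H + (Kc * norm H) * norm H" by (simp add: power2_eq_square)
    also have "\<dots> \<le> opM * norm H + (\<rho> - opM) * norm H"
      using small by (simp add: mult_right_mono)
    also have "\<dots> = \<rho> * norm H" by (simp add: algebra_simps)
    finally show "norm (Z (Suc k) - (Xs - \<sigma> *\<^sub>R Ss)) \<le> \<rho> * norm (Z k - (Xs - \<sigma> *\<^sub>R Ss))"
      by (simp add: H_def Zs_def)
  qed
qed

end
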